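(* Let $c_1,c_2\in X_d$ with $|(c_1,c_2)|>1$. Then: (i) for each $A\in G_0^+$, $(Ac_1,Ac_2)\in\mathcal T_{2+}$; (ii) for each $A\in G_0^+$, $(Ac_1,Ac_2)\in\mathcal T_{2+}\cap\mathcal T_{2,(2,1)}$, where $\mathcal T_{2,(2,1)}=\{(z_1,z_2):(z_2,z_1)\in\mathcal T_{2+}\}$.
   Context: Let $d\ge2$. $E_{d+1}=\mathbb R^{d+1}$, $E^{(c)}_{d+1}=\mathbb C^{d+1}$ with bilinear form $(x,y)=x^0y^0+x^dy^d-\sum_{j=1}^{d-1}x^jy^j$. $X_d=\{x\in E_{d+1}:(x,x)=1\}$, $X_d^{(c)}=\{z\in E^{(c)}_{d+1}:(z,z)=1\}$. $G_0^{(c)}$ is the identity component of the complex group preserving the form; $\exp$ is the matrix exponential; $\ell(a\wedge b)x=a(b,x)-b(a,x)$. $\mathcal C_1=\{\ell(a\wedge b):a,b\in E_{d+1},(a,a)=(b,b)=1,(a,b)=0,a^0b^d-a^db^0>0\}$, $\mathcal C_+=\bigcup_{\rho>0}\rho\,\mathcal C_1$. $G_0^+\subset G_0^{(c)}$ is the set of finite products $\exp(\tau_1M_1)\cdots\exp(\tau_NM_N)$ with $\mathrm{Im}\,\tau_j>0$, $M_j\in\mathcal C_+$. $\mathcal T_{n+}=\{(z_1,\dots,z_n)\in(X_d^{(c)})^n:\ z_j=\Lambda_1\cdots\Lambda_jc_j\ \forall j,\ \Lambda_j\in G_0^+,\ c_j\in X_d\}$. *)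

theory Defs
  imports "HOL-Analysis.Analysis"
begin

text \<open>Coordinates are indexed by 0..d. Vectors of E_{d+1} (resp. its complexification)
  are functions nat => real (resp. complex) vanishing outside {0..d}; (d+1)x(d+1) matrices are
  functions nat => nat => complex vanishing outside {0..d} x {0..d}.\<close>

definition eta :: "nat \<Rightarrow> nat \<Rightarrow> real" where
  "eta d j = (if j = 0 \<or> j = d then 1 else -1)"

definition bform :: "nat \<Rightarrow> (nat \<Rightarrow> 'a::{real_algebra_1,comm_ring_1}) \<Rightarrow> (nat \<Rightarrow> 'a) \<Rightarrow> 'a" where
  "bform d x y = (\<Sum>j\<le>d. of_real (eta d j) * x j * y j)"

definition realvec :: "nat \<Rightarrow> (nat \<Rightarrow> real) set" where
  "realvec d = {x. \<forall>j>d. x j = 0}"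

definition Xd :: "nat \<Rightarrow> (nat \<Rightarrow> real) set" where
  "Xd d = {x \<in> realvec d. bform d x x = 1}"

definition Xdc :: "nat \<Rightarrow> (nat \<Rightarrow> complex) set" where
  "Xdc d = {z. (\<forall>j>d. z j = 0) \<and> bform d z z = 1}"

definition cvec :: "(nat \<Rightarrow> real) \<Rightarrow> nat \<Rightarrow> complex" where
  "cvec x = (\<lambda>j. complex_of_real (x j))"

definition mone :: "nat \<Rightarrow> nat \<Rightarrow> nat \<Rightarrow> complex" where
  "mone d = (\<lambda>i j. if i = j \<and> i \<le> d then 1 else 0)"

definition mmult :: "nat \<Rightarrow> (nat \<Rightarrow> nat \<Rightarrow> complex) \<Rightarrow> (nat \<Rightarrow> nat \<Rightarrow> complex) \<Rightarrow> nat \<Rightarrow> nat \<Rightarrow> complex" where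
  "mmult d A B = (\<lambda>i j. \<Sum>k\<le>d. A i k * B k j)"

definition mvec :: "nat \<Rightarrow> (nat \<Rightarrow> nat \<Rightarrow> complex) \<Rightarrow> (nat \<Rightarrow> complex) \<Rightarrow> nat \<Rightarrow> complex" where
  "mvec d A z = (\<lambda>i. \<Sum>k\<le>d. A i k * z k)"

fun mpow :: "nat \<Rightarrow> (nat \<Rightarrow> nat \<Rightarrow> complex) \<Rightarrow> nat \<Rightarrow> nat \<Rightarrow> nat \<Rightarrow> complex" where
  "mpow d A 0 = mone d"
| "mpow d A (Suc n) = mmult d A (mpow d A n)"

definition mexp :: "nat \<Rightarrow> (nat \<Rightarrow> nat \<Rightarrow> complex) \<Rightarrow> nat \<Rightarrow> nat \<Rightarrow> complex" where
  "mexp d A = (\<lambda>i j. \<Sum>n. mpow d A n i j / of_nat (fact n))"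

definition smult_mat :: "complex \<Rightarrow> (nat \<Rightarrow> nat \<Rightarrow> complex) \<Rightarrow> nat \<Rightarrow> nat \<Rightarrow> complex" where
  "smult_mat t A = (\<lambda>i j. t * A i j)"

text \<open>The matrix of ell(a wedge b): x |-> a (b,x) - b (a,x).\<close>
definition ell :: "nat \<Rightarrow> (nat \<Rightarrow> real) \<Rightarrow> (nat \<Rightarrow> real) \<Rightarrow> nat \<Rightarrow> nat \<Rightarrow> complex" where
  "ell d a b = (\<lambda>i j. if i \<le> d \<and> j \<le> d
      then complex_of_real (a i * eta d j * b j - b i * eta d j * a j) else 0)"

definition C1 :: "nat \<Rightarrow> (nat \<Rightarrow> nat \<Rightarrow> complex) set" where
  "C1 d = {ell d a b | a b. a \<in> realvec d \<and> b \<in> realvec d \<and> bform d a a = 1 \<and> bform d b b = 1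
      \<and> bform d a b = 0 \<and> a 0 * b d - a d * b 0 > 0}"

definition Cplus :: "nat \<Rightarrow> (nat \<Rightarrow> nat \<Rightarrow> complex) set" where
  "Cplus d = {smult_mat (complex_of_real \<rho>) M | \<rho> M. \<rho> > 0 \<and> M \<in> C1 d}"

definition mprod_list :: "nat \<Rightarrow> (nat \<Rightarrow> nat \<Rightarrow> complex) list \<Rightarrow> nat \<Rightarrow> nat \<Rightarrow> complex" where
  "mprod_list d Ms = foldr (mmult d) Ms (mone d)"

definition G0plus :: "nat \<Rightarrow> (nat \<Rightarrow> nat \<Rightarrow> complex) set" where
  "G0plus d = {mprod_list d (map (\<lambda>(t, M). mexp d (smult_mat t M)) ts) | ts.
      ts \<noteq> [] \<and> (\<forall>(t, M) \<in> set ts. Im t > 0 \<and> M \<in> Cplus d)}"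

definition Tplus :: "nat \<Rightarrow> nat \<Rightarrow> (nat \<Rightarrow> complex) list set" where
  "Tplus d n = {zs. length zs = n \<and> (\<forall>z \<in> set zs. z \<in> Xdc d) \<and>
      (\<exists>Ls cs. length Ls = n \<and> length cs = n \<and> set Ls \<subseteq> G0plus d \<and> set cs \<subseteq> Xd d \<and>
        (\<forall>j<n. zs ! j = mvec d (mprod_list d (take (Suc j) Ls)) (cvec (cs ! j))))}"

definition T2_21 :: "nat \<Rightarrow> ((nat \<Rightarrow> complex) \<times> (nat \<Rightarrow> complex)) set" where
  "T2_21 d = {(z1, z2). [z2, z1] \<in> Tplus d 2}"

end

theory Submission
  imports Defs
begin
section \<open>Bilinear form\<close>

lemma bform_sym: "bform d x y = bform d y x"
  unfolding bform_def by (rule sum.cong) (auto simp: ac_simps)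

lemma bform_add_left: "bform d (\<lambda>j. x j + y j) z = bform d x z + bform d y z"
  unfolding bform_def by (simp add: algebra_simps sum.distrib)
lemma bform_diff_left: "bform d (\<lambda>j. x j - y j) z = bform d x z - bform d y z"
  unfolding bform_def by (simp add: algebra_simps sum_subtractf)
lemma bform_cmult_left: "bform d (\<lambda>j. c * x j) z = c * bform d x z"
  unfolding bform_def sum_distrib_left by (simp add: ac_simps)
lemma bform_multc_left: "bform d (\<lambda>j. x j * c) z = bform d x z * c"
  unfolding bform_def sum_distrib_right by (simp add: ac_simps)
lemma bform_neg_left: "bform d (\<lambda>j. - x j) z = - bform d x z"
  unfolding bform_def by (simp add: sum_negf)
lemma bform_add_right: "bform d z (\<lambda>j. x j + y j) = bform d z x + bform d z y"
  unfolding bform_def by (simp add: algebra_simps sum.distrib)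
lemma bform_diff_right: "bform d z (\<lambda>j. x j - y j) = bform d z x - bform d z y"
  unfolding bform_def by (simp add: algebra_simps sum_subtractf)
lemma bform_cmult_right: "bform d z (\<lambda>j. c * x j) = c * bform d z x"
  unfolding bform_def sum_distrib_left by (simp add: ac_simps)
lemma bform_multc_right: "bform d z (\<lambda>j. x j * c) = bform d z x * c"
  unfolding bform_def sum_distrib_right by (simp add: ac_simps)
lemma bform_neg_right: "bform d z (\<lambda>j. - x j) = - bform d z x"
  unfolding bform_def by (simp add: sum_negf)

lemmas bform_lin = bform_add_left bform_diff_left bform_cmult_left bform_multc_left bform_neg_left
  bform_add_right bform_diff_right bform_cmult_right bform_multc_right bform_neg_right

lemma bform_cvec: "bform d (cvec x) (cvec y) = complex_of_real (bform d x y)"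
  unfolding bform_def cvec_def by simp

lemma mvec_mmult: "mvec d (mmult d A B) z = mvec d A (mvec d B z)"
proof
  fix i
  have "mvec d (mmult d A B) z i = (\<Sum>k\<le>d. \<Sum>m\<le>d. A i m * B m k * z k)"
    unfolding mvec_def mmult_def by (simp add: sum_distrib_right)
  also have "\<dots> = (\<Sum>m\<le>d. \<Sum>k\<le>d. A i m * B m k * z k)" by (rule sum.swap)
  also have "\<dots> = mvec d A (mvec d B z) i"
    unfolding mvec_def by (simp add: sum_distrib_left mult.assoc)
  finally show "mvec d (mmult d A B) z i = mvec d A (mvec d B z) i" .
qed

lemma mvec_mone: assumes "\<forall>j>d. z j = 0" shows "mvec d (mone d) z = z"
proof
  fix i
  have "mvec d (mone d) z i = (\<Sum>k\<le>d. if k = i then (if i \<le> d then z i else 0) else 0)"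
    unfolding mvec_def mone_def by (rule sum.cong) auto
  also have "\<dots> = z i" using assms by (cases "i \<le> d") auto
  finally show "mvec d (mone d) z i = z i" .
qed

lemma mvec_smult: "mvec d (smult_mat c A) z = (\<lambda>i. c * mvec d A z i)"
  unfolding mvec_def smult_mat_def by (simp add: sum_distrib_left mult.assoc)

definition Lv :: "nat \<Rightarrow> (nat \<Rightarrow> real) \<Rightarrow> (nat \<Rightarrow> real) \<Rightarrow> (nat \<Rightarrow> complex) \<Rightarrow> nat \<Rightarrow> complex" where
  "Lv d a b z = (\<lambda>i. cvec a i * bform d (cvec b) z - cvec b i * bform d (cvec a) z)"
definition Pv :: "nat \<Rightarrow> (nat \<Rightarrow> real) \<Rightarrow> (nat \<Rightarrow> real) \<Rightarrow> (nat \<Rightarrow> complex) \<Rightarrow> nat \<Rightarrow> complex" where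
  "Pv d a b z = (\<lambda>i. cvec a i * bform d (cvec a) z + cvec b i * bform d (cvec b) z)"
definition rotv :: "nat \<Rightarrow> (nat \<Rightarrow> real) \<Rightarrow> (nat \<Rightarrow> real) \<Rightarrow> complex \<Rightarrow> (nat \<Rightarrow> complex) \<Rightarrow> nat \<Rightarrow> complex" where
  "rotv d a b t z = (\<lambda>i. z i + sin t * Lv d a b z i + (cos t - 1) * Pv d a b z i)"

lemma mvec_ell:
  assumes "a \<in> realvec d" "b \<in> realvec d"
  shows "mvec d (ell d a b) z = Lv d a b z"
proof
  fix i
  show "mvec d (ell d a b) z i = Lv d a b z i"
  proof (cases "i \<le> d")
    case True
    then show ?thesis unfolding mvec_def ell_def Lv_def bform_def cvec_def
      by (simp add: sum_distrib_left sum_subtractf[symmetric] algebra_simps)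
  next
    case False
    then show ?thesis using assms unfolding mvec_def ell_def Lv_def realvec_def cvec_def by auto
  qed
qed

definition orth :: "nat \<Rightarrow> (nat \<Rightarrow> real) \<Rightarrow> (nat \<Rightarrow> real) \<Rightarrow> bool" where
  "orth d a b \<longleftrightarrow> a \<in> realvec d \<and> b \<in> realvec d \<and> bform d a a = 1 \<and> bform d b b = 1 \<and> bform d a b = 0"

lemma orth_forms:
  assumes "orth d a b"
  shows "bform d (cvec a) (cvec a) = 1" "bform d (cvec b) (cvec b) = 1"
    "bform d (cvec a) (cvec b) = 0" "bform d (cvec b) (cvec a) = 0"
  using assms unfolding orth_def by (auto simp: bform_cvec bform_sym[of d b a])

lemma Lv_forms:
  assumes "orth d a b"
  shows "bform d (cvec a) (Lv d a b z) = bform d (cvec b) z"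
    "bform d (cvec b) (Lv d a b z) = - bform d (cvec a) z"
    "bform d (cvec a) (Pv d a b z) = bform d (cvec a) z"
    "bform d (cvec b) (Pv d a b z) = bform d (cvec b) z"
  using orth_forms[OF assms] unfolding Lv_def Pv_def by (simp_all add: bform_lin)

lemma LL: assumes "orth d a b" shows "Lv d a b (Lv d a b z) = (\<lambda>i. - Pv d a b z i)"
  using Lv_forms[OF assms] by (simp add: Lv_def[of d a b "Lv d a b z"] Pv_def algebra_simps)
lemma LP: assumes "orth d a b" shows "Lv d a b (Pv d a b z) = Lv d a b z"
  using Lv_forms[OF assms] by (simp add: Lv_def[of d a b "Pv d a b z"] Lv_def[of d a b z])

lemma PL: assumes "orth d a b" shows "Pv d a b (Lv d a b z) = Lv d a b z"
  apply (subst Pv_def) apply (simp only: Lv_forms[OF assms]) by (simp add: Lv_def algebra_simps)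
lemma PP: assumes "orth d a b" shows "Pv d a b (Pv d a b z) = Pv d a b z"
  apply (subst Pv_def) apply (simp only: Lv_forms[OF assms]) by (simp add: Pv_def)

lemma Lv_scale: "Lv d a b (\<lambda>i. c * z i) = (\<lambda>i. c * Lv d a b z i)"
  unfolding Lv_def by (simp add: bform_lin algebra_simps)
lemma Pv_scale: "Pv d a b (\<lambda>i. c * z i) = (\<lambda>i. c * Pv d a b z i)"
  unfolding Pv_def by (simp add: bform_lin algebra_simps)

lemma Lv_scale2: "Lv d a b (\<lambda>i. z i * c) = (\<lambda>i. Lv d a b z i * c)"
  unfolding Lv_def by (simp add: bform_lin algebra_simps)
lemma Pv_scale2: "Pv d a b (\<lambda>i. z i * c) = (\<lambda>i. Pv d a b z i * c)"
  unfolding Pv_def by (simp add: bform_lin algebra_simps)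
lemma Lv_neg: "Lv d a b (\<lambda>i. - z i) = (\<lambda>i. - Lv d a b z i)"
  unfolding Lv_def by (simp add: bform_lin algebra_simps)
lemma Pv_neg: "Pv d a b (\<lambda>i. - z i) = (\<lambda>i. - Pv d a b z i)"
  unfolding Pv_def by (simp add: bform_lin algebra_simps)
lemma Lv_add: "Lv d a b (\<lambda>i. z i + w i) = (\<lambda>i. Lv d a b z i + Lv d a b w i)"
  unfolding Lv_def by (simp add: bform_lin algebra_simps)
lemma Pv_add: "Pv d a b (\<lambda>i. z i + w i) = (\<lambda>i. Pv d a b z i + Pv d a b w i)"
  unfolding Pv_def by (simp add: bform_lin algebra_simps)
lemmas LPlin = Lv_scale Pv_scale Lv_scale2 Pv_scale2 Lv_neg Pv_neg Lv_add Pv_add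

section \<open>Matrix exponential of a rotation generator\<close>

lemma mpow_Suc_vec:
  assumes "a \<in> realvec d" "b \<in> realvec d"
  shows "mvec d (mpow d (smult_mat t (smult_mat (complex_of_real \<rho>) (ell d a b))) (Suc n)) z
     = (\<lambda>i. (t * complex_of_real \<rho>) * Lv d a b (mvec d (mpow d (smult_mat t (smult_mat (complex_of_real \<rho>) (ell d a b))) n) z) i)"
  by (simp add: mvec_mmult mvec_smult mvec_ell[OF assms] mult.assoc)

lemma mpow_vec:
  fixes t :: complex and \<rho> :: real and k :: nat
  assumes "orth d a b" "\<forall>j>d. z j = 0"
  defines "K \<equiv> smult_mat t (smult_mat (complex_of_real \<rho>) (ell d a b))"
  defines "c \<equiv> t * complex_of_real \<rho>"
  shows "mvec d (mpow d K (2*k+1)) z = (\<lambda>i. c^(2*k+1) * (-1)^k * Lv d a b z i)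
       \<and> mvec d (mpow d K (2*k+2)) z = (\<lambda>i. c^(2*k+2) * (-1)^(k+1) * Pv d a b z i)"
proof -
  have ab: "a \<in> realvec d" "b \<in> realvec d" using assms(1) unfolding orth_def by auto
  note S = mpow_Suc_vec[OF ab, of t \<rho>, folded K_def c_def]
  have one: "mvec d (mpow d K 1) z = (\<lambda>i. c * Lv d a b z i)"
    using S[of 0] by (simp add: mvec_mone[OF assms(2)])
  have step2: "mvec d (mpow d K (Suc (Suc n))) z = (\<lambda>i. c * c * - Pv d a b (mvec d (mpow d K n) z) i)" for n
    using S[of "Suc n"] S[of n] by (simp add: Lv_scale LL[OF assms(1)] algebra_simps)
  show ?thesis
  proof (induction k)
    case 0
    then show ?case using one step2[of 0]
      by (simp add: mvec_mone[OF assms(2)] Pv_scale algebra_simps LL[OF assms(1)] Lv_scale)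
  next
    case (Suc k)
    have e1: "2 * Suc k + 1 = Suc (Suc (2*k+1))" "2 * Suc k + 2 = Suc (Suc (2*k+2))" by auto
    show ?case unfolding e1 step2 using Suc
      by (simp add: LPlin PL[OF assms(1)] PP[OF assms(1)] algebra_simps)
  qed
qed

lemma mpow_term:
  fixes t :: complex and \<rho> :: real
  assumes "orth d a b" "\<forall>j>d. z j = 0"
  defines "K \<equiv> smult_mat t (smult_mat (complex_of_real \<rho>) (ell d a b))"
  defines "c \<equiv> t * complex_of_real \<rho>"
  shows "mvec d (mpow d K n) z i / fact n = (if n = 0 then z i else 0)
     + complex_of_real (sin_coeff n) * c^n * Lv d a b z i
     + (complex_of_real (cos_coeff n) * c^n - (if n = 0 then 1 else 0)) * Pv d a b z i"
proof -
  note M = mpow_vec[OF assms(1,2), of t \<rho>, folded K_def c_def]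
  consider "n = 0" | k where "n = 2*k+1" | k where "n = 2*k+2"
  proof -
    assume h0: "n = 0 \<Longrightarrow> thesis" and h1: "\<And>k. n = 2*k+1 \<Longrightarrow> thesis" and h2: "\<And>k. n = 2*k+2 \<Longrightarrow> thesis"
    show thesis
    proof (cases "odd n")
      case True
      then have "n = 2*(n div 2)+1" by presburger
      then show ?thesis by (rule h1)
    next
      case False
      show ?thesis
      proof (cases "n = 0")
        case True then show ?thesis using h0 by simp
      next
        case nz: False
        then have "n = 2*((n - 2) div 2)+2" using False by presburger
        then show ?thesis by (rule h2)
      qed
    qed
  qed
  then show ?thesis
  proof cases
    case 1
    then show ?thesis by (simp add: mvec_mone[OF assms(2)] sin_coeff_def cos_coeff_def)
  next
    case (2 k)
    have sc: "sin_coeff n = (-1)^k / fact n" "cos_coeff n = 0"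
      unfolding sin_coeff_def cos_coeff_def using 2 by auto
    show ?thesis using M[of k] 2 unfolding sc by simp
  next
    case (3 k)
    have e: "even n" "n div 2 = k + 1" using 3 by auto
    have sc: "sin_coeff n = 0" "cos_coeff n = (-1)^(k+1) / fact n"
      unfolding sin_coeff_def cos_coeff_def using e by auto
    show ?thesis using M[of k] 3 unfolding sc by simp
  qed
qed

lemma rot_sums:
  fixes t :: complex and \<rho> :: real
  assumes "orth d a b" "\<forall>j>d. z j = 0"
  shows "(\<lambda>n. mvec d (mpow d (smult_mat t (smult_mat (complex_of_real \<rho>) (ell d a b))) n) z i / fact n)
     sums rotv d a b (t * complex_of_real \<rho>) z i"
proof -
  define c where "c = t * complex_of_real \<rho>"
  have s1: "(\<lambda>n. complex_of_real (sin_coeff n) * c^n) sums sin c"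
    using sin_converges[of c] by (simp add: scaleR_conv_of_real)
  have s2: "(\<lambda>n. complex_of_real (cos_coeff n) * c^n) sums cos c"
    using cos_converges[of c] by (simp add: scaleR_conv_of_real)
  have s0: "(\<lambda>n. if n = 0 then z i else 0) sums z i" using sums_single[of 0 "\<lambda>_. z i"] by simp
  have s3: "(\<lambda>n. if n = 0 then (1::complex) else 0) sums 1" using sums_single[of 0 "\<lambda>_. 1::complex"] by simp
  have "(\<lambda>n. (if n = 0 then z i else 0)
     + complex_of_real (sin_coeff n) * c^n * Lv d a b z i
     + (complex_of_real (cos_coeff n) * c^n - (if n = 0 then 1 else 0)) * Pv d a b z i)
     sums (z i + sin c * Lv d a b z i + (cos c - 1) * Pv d a b z i)"
    by (intro sums_add sums_mult2 sums_diff s0 s1 s2 s3)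
  then show ?thesis
    unfolding rotv_def c_def[symmetric]
    using mpow_term[OF assms, of t \<rho>, folded c_def] by simp
qed

definition ev :: "nat \<Rightarrow> nat \<Rightarrow> complex" where "ev j = (\<lambda>k. if k = j then 1 else 0)"

lemma mvec_ev: "j \<le> d \<Longrightarrow> mvec d A (ev j) i = A i j"
  unfolding mvec_def ev_def by (simp add: if_distrib cong: if_cong)

lemma mpow_col_zero:
  assumes "j > d" shows "mpow d K n i j = 0"
proof (induction n arbitrary: i)
  case 0 then show ?case using assms by (simp add: mone_def)
next
  case (Suc n) then show ?case by (simp add: mmult_def)
qed

lemma mexp_rot:
  fixes t :: complex and \<rho> :: real
  assumes "orth d a b" "\<forall>j>d. z j = 0"
  shows "mvec d (mexp d (smult_mat t (smult_mat (complex_of_real \<rho>) (ell d a b)))) z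
     = rotv d a b (t * complex_of_real \<rho>) z"
proof
  fix i
  define K where "K = smult_mat t (smult_mat (complex_of_real \<rho>) (ell d a b))"
  define c where "c = t * complex_of_real \<rho>"
  have ab: "a \<in> realvec d" "b \<in> realvec d" using assms(1) unfolding orth_def by auto
  have ent: "mexp d K i j = rotv d a b c (ev j) i" if "j \<le> d" for j
  proof -
    have sev: "\<forall>k>d. ev j k = 0" using that unfolding ev_def by auto
    have "(\<lambda>n. mvec d (mpow d K n) (ev j) i / fact n) sums rotv d a b c (ev j) i"
      using rot_sums[OF assms(1) sev, where i=i and t=t and \<rho>=\<rho>] unfolding K_def c_def .
    then have "(\<lambda>n. mpow d K n i j / fact n) sums rotv d a b c (ev j) i"
      by (simp only: mvec_ev[OF that])
    then show ?thesis unfolding mexp_def by (simp add: sums_iff)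
  qed
  have bev: "bform d (cvec x) (ev j) = complex_of_real (eta d j) * cvec x j" if "j \<le> d" for x j
    unfolding bform_def ev_def using that by (simp add: if_distrib cong: if_cong)
  have "mvec d (mexp d K) z i = (\<Sum>j\<le>d. rotv d a b c (ev j) i * z j)"
    unfolding mvec_def by (rule sum.cong) (auto simp: ent)
  also have "\<dots> = (\<Sum>j\<le>d. ev j i * z j
       + sin c * (cvec a i * (complex_of_real (eta d j) * cvec b j * z j) - cvec b i * (complex_of_real (eta d j) * cvec a j * z j))
       + (cos c - 1) * (cvec a i * (complex_of_real (eta d j) * cvec a j * z j) + cvec b i * (complex_of_real (eta d j) * cvec b j * z j)))"
    by (rule sum.cong) (auto simp: rotv_def Lv_def Pv_def bev algebra_simps)
  also have "\<dots> = (\<Sum>j\<le>d. ev j i * z j)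
       + sin c * (cvec a i * bform d (cvec b) z - cvec b i * bform d (cvec a) z)
       + (cos c - 1) * (cvec a i * bform d (cvec a) z + cvec b i * bform d (cvec b) z)"
    unfolding bform_def by (simp add: sum.distrib sum_subtractf sum_distrib_left mult.assoc right_diff_distrib distrib_left)
  also have "(\<Sum>j\<le>d. ev j i * z j) = z i"
  proof -
    have "(\<Sum>j\<le>d. ev j i * z j) = (\<Sum>j\<le>d. if j = i then z i else 0)"
      unfolding ev_def by (rule sum.cong) auto
    then show ?thesis using assms(2) by (cases "i \<le> d") auto
  qed
  finally show "mvec d (mexp d (smult_mat t (smult_mat (complex_of_real \<rho>) (ell d a b)))) z i
     = rotv d a b (t * complex_of_real \<rho>) z i"
    unfolding K_def c_def rotv_def Lv_def Pv_def by simp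
qed

lemma rot_forms:
  assumes "orth d a b"
  shows "bform d (cvec a) (rotv d a b t z) = cos t * bform d (cvec a) z + sin t * bform d (cvec b) z"
    "bform d (cvec b) (rotv d a b t z) = cos t * bform d (cvec b) z - sin t * bform d (cvec a) z"
  using Lv_forms[OF assms] unfolding rotv_def by (simp_all add: bform_lin algebra_simps)

lemma rot_comp:
  assumes "orth d a b"
  shows "rotv d a b s (rotv d a b t z) = rotv d a b (s + t) z"
proof
  fix i
  show "rotv d a b s (rotv d a b t z) i = rotv d a b (s + t) z i"
    apply (subst rotv_def)
    apply (simp only: Lv_def Pv_def rot_forms[OF assms])
    apply (simp add: rotv_def Lv_def Pv_def sin_add cos_add)
    apply algebra
    done
qed

lemma rot_zero: "rotv d a b 0 z = z"
  unfolding rotv_def by simp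

lemma rot_supp:
  assumes "orth d a b" "\<forall>j>d. z j = 0"
  shows "\<forall>j>d. rotv d a b t z j = 0"
  using assms unfolding orth_def realvec_def rotv_def Lv_def Pv_def cvec_def by auto

lemma rot_bform:
  assumes "orth d a b"
  shows "bform d (rotv d a b t z) (rotv d a b t z) = bform d z z"
proof -
  note O = orth_forms[OF assms]
  define A where "A = bform d (cvec a) z"
  define B where "B = bform d (cvec b) z"
  have sy: "bform d z (cvec a) = A" "bform d z (cvec b) = B"
    unfolding A_def B_def by (simp_all add: bform_sym)
  have s2: "sin t * sin t = 1 - cos t * cos t" using sin_cos_squared_add3[of t] by algebra
  show ?thesis
    unfolding rotv_def Lv_def Pv_def A_def[symmetric] B_def[symmetric]
    by (simp add: bform_lin O sy A_def[symmetric] B_def[symmetric] algebra_simps s2)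
qed

lemma Cplus_elim:
  assumes "M \<in> Cplus d"
  obtains \<rho> a b where "\<rho> > 0" "orth d a b" "a 0 * b d - a d * b 0 > 0"
    "M = smult_mat (complex_of_real \<rho>) (ell d a b)"
  using assms unfolding Cplus_def C1_def orth_def by blast

definition app :: "nat \<Rightarrow> (complex \<times> (nat \<Rightarrow> nat \<Rightarrow> complex)) list \<Rightarrow> (nat \<Rightarrow> complex) \<Rightarrow> nat \<Rightarrow> complex" where
  "app d ts z = foldr (\<lambda>(t, M) w. mvec d (mexp d (smult_mat t M)) w) ts z"

lemma app_Nil [simp]: "app d [] z = z" unfolding app_def by simp
lemma app_Cons [simp]: "app d ((t,M) # ts) z = mvec d (mexp d (smult_mat t M)) (app d ts z)"
  unfolding app_def by simp
lemma app_append: "app d (xs @ ys) z = app d xs (app d ys z)"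
  unfolding app_def by simp

lemma mexp_Cplus:
  assumes "M \<in> Cplus d" "\<forall>j>d. z j = 0"
  shows "(\<forall>j>d. mvec d (mexp d (smult_mat t M)) z j = 0) \<and>
     bform d (mvec d (mexp d (smult_mat t M)) z) (mvec d (mexp d (smult_mat t M)) z) = bform d z z"
proof -
  obtain \<rho> a b where h: "orth d a b" "M = smult_mat (complex_of_real \<rho>) (ell d a b)"
    using Cplus_elim[OF assms(1)] by metis
  show ?thesis unfolding h(2) mexp_rot[OF h(1) assms(2)]
    using rot_supp[OF h(1) assms(2)] rot_bform[OF h(1)] by simp
qed

lemma app_props:
  assumes "\<forall>(t, M) \<in> set ts. M \<in> Cplus d" "\<forall>j>d. z j = 0"
  shows "(\<forall>j>d. app d ts z j = 0) \<and> bform d (app d ts z) (app d ts z) = bform d z z"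
  using assms(1)
proof (induction ts)
  case Nil then show ?case using assms(2) by simp
next
  case (Cons x ts)
  obtain t M where x: "x = (t, M)" by fastforce
  have M: "M \<in> Cplus d" using Cons.prems x by auto
  have IH: "(\<forall>j>d. app d ts z j = 0) \<and> bform d (app d ts z) (app d ts z) = bform d z z"
    using Cons by auto
  show ?case unfolding x app_Cons using mexp_Cplus[OF M, of "app d ts z" t] IH by simp
qed

lemma mvec_prod:
  assumes "\<forall>(t, M) \<in> set ts. M \<in> Cplus d" "\<forall>j>d. z j = 0"
  shows "mvec d (mprod_list d (map (\<lambda>(t, M). mexp d (smult_mat t M)) ts)) z = app d ts z"
  using assms(1)
proof (induction ts)
  case Nil then show ?case using assms(2) by (simp add: mprod_list_def mvec_mone)
next
  case (Cons x ts)
  obtain t M where x: "x = (t, M)" by fastforce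
  have "mvec d (mprod_list d (map (\<lambda>(t, M). mexp d (smult_mat t M)) (x # ts))) z
     = mvec d (mexp d (smult_mat t M)) (mvec d (mprod_list d (map (\<lambda>(t, M). mexp d (smult_mat t M)) ts)) z)"
    unfolding x mprod_list_def by (simp add: mvec_mmult)
  then show ?case using Cons x by simp
qed

definition goodts :: "nat \<Rightarrow> (complex \<times> (nat \<Rightarrow> nat \<Rightarrow> complex)) list \<Rightarrow> bool" where
  "goodts d ts \<longleftrightarrow> ts \<noteq> [] \<and> (\<forall>(t, M) \<in> set ts. Im t > 0 \<and> M \<in> Cplus d)"

lemma goodts_G0: "goodts d ts \<Longrightarrow> mprod_list d (map (\<lambda>(t, M). mexp d (smult_mat t M)) ts) \<in> G0plus d"
  unfolding goodts_def G0plus_def by blast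

lemma G0_goodts: "A \<in> G0plus d \<Longrightarrow> \<exists>ts. goodts d ts \<and> A = mprod_list d (map (\<lambda>(t, M). mexp d (smult_mat t M)) ts)"
  unfolding goodts_def G0plus_def by blast

lemma goodts_Cplus: "goodts d ts \<Longrightarrow> \<forall>(t, M) \<in> set ts. M \<in> Cplus d"
  unfolding goodts_def by auto

lemma cvec_supp: "c \<in> Xd d \<Longrightarrow> \<forall>j>d. cvec c j = 0"
  unfolding Xd_def realvec_def cvec_def by auto

lemma cvec_form: "c \<in> Xd d \<Longrightarrow> bform d (cvec c) (cvec c) = 1"
  unfolding Xd_def by (simp add: bform_cvec)

lemma T2_intro:
  assumes "goodts d ts1" "goodts d ts2" "c1 \<in> Xd d" "c2 \<in> Xd d"
  shows "[app d ts1 (cvec c1), app d ts1 (app d ts2 (cvec c2))] \<in> Tplus d 2"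
proof -
  define L1 where "L1 = mprod_list d (map (\<lambda>(t, M). mexp d (smult_mat t M)) ts1)"
  define L2 where "L2 = mprod_list d (map (\<lambda>(t, M). mexp d (smult_mat t M)) ts2)"
  have C1: "\<forall>(t, M) \<in> set ts1. M \<in> Cplus d" and C2: "\<forall>(t, M) \<in> set ts2. M \<in> Cplus d"
    using assms(1,2) goodts_Cplus by auto
  note s1 = cvec_supp[OF assms(3)] and s2 = cvec_supp[OF assms(4)]
  have P2: "(\<forall>j>d. app d ts2 (cvec c2) j = 0)" using app_props[OF C2 s2] by simp
  have e1: "mvec d L1 (cvec c1) = app d ts1 (cvec c1)" unfolding L1_def using mvec_prod[OF C1 s1] .
  have e2: "mvec d L1 (mvec d L2 (cvec c2)) = app d ts1 (app d ts2 (cvec c2))"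
    unfolding L1_def L2_def using mvec_prod[OF C2 s2] mvec_prod[OF C1 P2] by simp
  have x1: "app d ts1 (cvec c1) \<in> Xdc d"
    using app_props[OF C1 s1] cvec_form[OF assms(3)] unfolding Xdc_def by simp
  have x2: "app d ts1 (app d ts2 (cvec c2)) \<in> Xdc d"
    using app_props[OF C1 P2] app_props[OF C2 s2] cvec_form[OF assms(4)] unfolding Xdc_def by simp
  have t1: "mvec d (mprod_list d (take (Suc 0) [L1, L2])) (cvec c1) = app d ts1 (cvec c1)"
    using e1 by (simp add: mprod_list_def mvec_mmult mvec_mone[OF s1])
  have t2: "mvec d (mprod_list d (take (Suc 1) [L1, L2])) (cvec c2) = app d ts1 (app d ts2 (cvec c2))"
    using e2 by (simp add: mprod_list_def mvec_mmult mvec_mone[OF s2])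
  have G: "L1 \<in> G0plus d" "L2 \<in> G0plus d" unfolding L1_def L2_def using goodts_G0 assms by auto
  show ?thesis unfolding Tplus_def
    apply (simp add: x1 x2)
    apply (rule exI[of _ "[L1, L2]"])
    apply simp
    apply (rule exI[of _ "[c1, c2]"])
    using G assms(3,4) t1 t2 by (auto simp: less_Suc_eq numeral_2_eq_2)
qed

definition ori :: "nat \<Rightarrow> (nat \<Rightarrow> real) \<Rightarrow> (nat \<Rightarrow> real) \<Rightarrow> real" where
  "ori d x y = x 0 * y d - x d * y 0"

lemma bform_le0:
  fixes x :: "nat \<Rightarrow> real"
  assumes "x 0 = 0" "x d = 0"
  shows "bform d x x \<le> 0"
  unfolding bform_def
proof (rule sum_nonpos)
  fix j assume "j \<in> {..d}"
  show "of_real (eta d j) * x j * x j \<le> 0"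
    using assms by (cases "j = 0 \<or> j = d") (auto simp: eta_def)
qed

lemma third_neg:
  fixes a b x :: "nat \<Rightarrow> real"
  assumes "orth d a b" "ori d a b \<noteq> 0" "bform d a x = 0" "bform d b x = 0"
  shows "bform d x x \<le> 0"
proof -
  define al where "al = b 0 * x d - b d * x 0"
  define be where "be = x 0 * a d - x d * a 0"
  define ka where "ka = ori d a b"
  define u where "u = (\<lambda>j. al * a j + be * b j + ka * x j)"
  have u0: "u 0 = 0" "u d = 0" unfolding u_def al_def be_def ka_def ori_def by algebra+
  have O: "bform d a a = 1" "bform d b b = 1" "bform d a b = 0" "bform d b a = 0"
    "bform d x a = 0" "bform d x b = 0"
    using assms unfolding orth_def by (auto simp: bform_sym)
  have "bform d u u = al*al + be*be + ka*ka * bform d x x"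
    unfolding u_def using O assms(3,4) by (simp add: bform_lin algebra_simps)
  moreover have "bform d u u \<le> 0" using bform_le0[OF u0] .
  ultimately have "ka*ka * bform d x x \<le> 0"
  proof -
    assume "bform d u u = al*al + be*be + ka*ka * bform d x x" "bform d u u \<le> 0"
    moreover have "al*al \<ge> 0" "be*be \<ge> 0" by simp_all
    ultimately show ?thesis by linarith
  qed
  moreover have "ka * ka > 0" using assms(2) unfolding ka_def by (metis not_real_square_gt_zero)
  ultimately show ?thesis
  proof -
    assume h: "ka * ka * bform d x x \<le> 0" "ka * ka > 0"
    show ?thesis
    proof (rule ccontr)
      assume "\<not> bform d x x \<le> 0"
      then have "ka * ka * bform d x x > 0" using h(2) by simp
      then show False using h(1) by linarith
    qed
  qed
qed

lemma sq_sum_le0: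
  fixes p q U V :: real
  assumes "p*p*U + q*q*V \<le> 0" "U > 0" "V > 0"
  shows "p = 0 \<and> q = 0"
proof -
  have "p*p*U \<ge> 0" "q*q*V \<ge> 0" using assms(2,3) by simp_all
  then have "p*p*U = 0" "q*q*V = 0" using assms(1) by linarith+
  then show ?thesis using assms(2,3) by simp
qed

lemma pos_pair:
  fixes u x :: "nat \<Rightarrow> real"
  assumes "bform d u u > 0" "bform d x x > 0" "bform d u x = 0"
  shows "ori d u x \<noteq> 0"
proof
  assume o: "ori d u x = 0"
  have sx: "bform d x u = 0" using assms(3) by (simp add: bform_sym)
  define v where "v = (\<lambda>j. x 0 * u j - u 0 * x j)"
  have v0: "v 0 = 0" "v d = 0" using o unfolding v_def ori_def by (simp_all add: algebra_simps)
  have "bform d v v = x 0 * x 0 * bform d u u + u 0 * u 0 * bform d x x"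
    unfolding v_def using assms(3) sx by (simp add: bform_lin algebra_simps)
  with bform_le0[OF v0] have "x 0 * x 0 * bform d u u + u 0 * u 0 * bform d x x \<le> 0" by simp
  then have xu0: "x 0 = 0" "u 0 = 0" using sq_sum_le0 assms(1,2) by blast+
  define v' where "v' = (\<lambda>j. x d * u j - u d * x j)"
  have v'0: "v' 0 = 0" "v' d = 0" using xu0 unfolding v'_def by simp_all
  have "bform d v' v' = x d * x d * bform d u u + u d * u d * bform d x x"
    unfolding v'_def using assms(3) sx by (simp add: bform_lin algebra_simps)
  with bform_le0[OF v'0] have "x d * x d * bform d u u + u d * u d * bform d x x \<le> 0" by simp
  then have "u d = 0" using sq_sum_le0 assms(1,2) by blast
  then have "bform d u u \<le> 0" using bform_le0[of u d] xu0 by simp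
  then show False using assms(1) by simp
qed

lemma sin_ii: "sin (\<i> * complex_of_real x) = \<i> * complex_of_real (sinh x)"
  by (simp add: sin_i_times sinh_def exp_of_real exp_minus field_simps)

lemma cos_ii: "cos (\<i> * complex_of_real x) = complex_of_real (cosh x)"
  by (simp add: cos_i_times cosh_def exp_of_real exp_minus field_simps)

lemma bform_div: "bform d (\<lambda>j. x j / c) (\<lambda>j. y j / e) = bform d x y / (c * e)"
  for x y :: "nat \<Rightarrow> real"
  unfolding bform_def by (simp add: sum_divide_distrib)

lemma rebase:
  assumes "orth d a0 b0" "ori d a0 b0 > 0" "c \<in> realvec d" "bform d c c = 1"
  obtains a b \<gamma> where "orth d a b" "ori d a b > 0" "ell d a b = ell d a0 b0"
    "bform d a c = 0" "bform d b c = \<gamma>" "\<gamma> > 0"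
proof -
  define A where "A = bform d a0 c"
  define B where "B = bform d b0 c"
  define \<gamma> where "\<gamma> = sqrt (A*A + B*B)"
  have ne: "A*A + B*B > 0"
  proof (rule ccontr)
    assume "\<not> A*A + B*B > 0"
    moreover have "A*A \<ge> 0" "B*B \<ge> 0" by simp_all
    ultimately have "A*A = 0" "B*B = 0" by linarith+
    then have "A = 0" "B = 0" by simp_all
    then have "bform d c c \<le> 0" using third_neg[OF assms(1)] assms(2) unfolding A_def B_def by simp
    then show False using assms(4) by simp
  qed
  then have gpos: "\<gamma> > 0" unfolding \<gamma>_def by simp
  have gsq: "\<gamma> * \<gamma> = A*A + B*B" unfolding \<gamma>_def using ne by simp
  define p where "p = B / \<gamma>"
  define q where "q = A / \<gamma>"
  have pq: "p*p + q*q = 1"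
  proof -
    have "p*p + q*q = (A*A+B*B)/(\<gamma>*\<gamma>)" unfolding p_def q_def by (simp add: add_divide_distrib)
    then show ?thesis using gpos by (simp add: gsq[symmetric])
  qed
  define a where "a = (\<lambda>j. p * a0 j - q * b0 j)"
  define b where "b = (\<lambda>j. q * a0 j + p * b0 j)"
  have O: "a0 \<in> realvec d" "b0 \<in> realvec d" "bform d a0 a0 = 1" "bform d b0 b0 = 1" "bform d a0 b0 = 0" "bform d b0 a0 = 0"
    using assms(1) unfolding orth_def by (auto simp: bform_sym)
  have "orth d a b"
    unfolding orth_def
  proof (intro conjI)
    show "a \<in> realvec d" "b \<in> realvec d" using O(1,2) unfolding a_def b_def realvec_def by auto
    show "bform d a a = 1" unfolding a_def using O pq by (simp add: bform_lin algebra_simps)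
    show "bform d b b = 1" unfolding b_def using O pq by (simp add: bform_lin algebra_simps)
    show "bform d a b = 0" unfolding a_def b_def using O by (simp add: bform_lin algebra_simps)
  qed
  moreover have "ori d a b > 0"
  proof -
    have "ori d a b = (p*p + q*q) * ori d a0 b0" unfolding ori_def a_def b_def by algebra
    then show ?thesis using pq assms(2) by simp
  qed
  moreover have "ell d a b = ell d a0 b0"
  proof (intro ext)
    fix i j
    have "a i * eta d j * b j - b i * eta d j * a j = (p*p+q*q) * (a0 i * eta d j * b0 j - b0 i * eta d j * a0 j)"
      unfolding a_def b_def by algebra
    then show "ell d a b i j = ell d a0 b0 i j" unfolding ell_def using pq by simp
  qed
  moreover have "bform d a c = 0" unfolding a_def
    apply (simp only: bform_lin A_def[symmetric] B_def[symmetric])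
    by (simp add: p_def q_def field_simps)
  moreover have "bform d b c = \<gamma>" unfolding b_def
    apply (simp only: bform_lin A_def[symmetric] B_def[symmetric])
    using gsq gpos by (simp add: p_def q_def field_simps)
  ultimately show ?thesis using that gpos by blast
qed

lemma tube_rep:
  fixes X Y :: "nat \<Rightarrow> real"
  assumes "X \<in> realvec d" "Y \<in> realvec d" "bform d X X - bform d Y Y = 1" "bform d X Y = 0"
    "bform d Y Y > 0" "ori d Y X > 0"
  shows "\<exists>ts c. goodts d ts \<and> c \<in> Xd d \<and> app d ts (cvec c) = (\<lambda>j. complex_of_real (X j) + \<i> * complex_of_real (Y j))"
proof -
  define nY where "nY = sqrt (bform d Y Y)"
  define nX where "nX = sqrt (bform d X X)"
  have nYp: "nY > 0" unfolding nY_def using assms(5) by simp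
  have XXp: "bform d X X = 1 + bform d Y Y" using assms(3) by simp
  have nXp: "nX > 0" unfolding nX_def using XXp assms(5) by simp
  have nY2: "nY * nY = bform d Y Y" unfolding nY_def using assms(5) by simp
  have nX2: "nX * nX = bform d X X" unfolding nX_def using XXp assms(5) by simp
  define ah where "ah = (\<lambda>j. Y j / nY)"
  define bh where "bh = (\<lambda>j. X j / nX)"
  define \<sigma> where "\<sigma> = arsinh nY"
  have sh: "sinh \<sigma> = nY" unfolding \<sigma>_def by simp
  have ch: "cosh \<sigma> = nX"
  proof -
    have "cosh \<sigma> = sqrt (nY^2 + 1)" unfolding \<sigma>_def by (rule cosh_arsinh_real)
    also have "nY^2 + 1 = nX * nX" using nY2 nX2 XXp by (simp add: power2_eq_square)
    finally show ?thesis using nXp by simp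
  qed
  have sp: "\<sigma> > 0" unfolding \<sigma>_def using nYp by simp
  have orth: "orth d ah bh" unfolding orth_def
  proof (intro conjI)
    show "ah \<in> realvec d" "bh \<in> realvec d" using assms(1,2) unfolding ah_def bh_def realvec_def by auto
    show "bform d ah ah = 1" unfolding ah_def bform_div using nY2 nYp assms(5) by simp
    show "bform d bh bh = 1" unfolding bh_def bform_div using nX2 nXp XXp assms(5) by simp
    show "bform d ah bh = 0" unfolding ah_def bh_def bform_div using assms(4) bform_sym[of d X Y] by simp
  qed
  have "ori d ah bh = ori d Y X / (nY * nX)" unfolding ori_def ah_def bh_def
    by (simp add: times_divide_times_eq diff_divide_distrib)
  then have ori: "ori d ah bh > 0" using assms(6) nXp nYp by simp
  define M where "M = smult_mat (complex_of_real 1) (ell d ah bh)"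
  have C1: "ell d ah bh \<in> C1 d" unfolding C1_def using orth ori unfolding orth_def ori_def by blast
  have MC: "M \<in> Cplus d" unfolding M_def Cplus_def using C1 zero_less_one by blast
  define ts where "ts = [(\<i> * complex_of_real \<sigma>, M)]"
  have g: "goodts d ts" unfolding goodts_def ts_def using MC sp by simp
  have c: "bh \<in> Xd d" using orth unfolding Xd_def orth_def by simp
  have sb: "\<forall>j>d. cvec bh j = 0" using cvec_supp[OF c] .
  have fo: "bform d (cvec bh) (cvec bh) = 1" "bform d (cvec ah) (cvec bh) = 0"
    using orth_forms[OF orth] by simp_all
  have "app d ts (cvec bh) = rotv d ah bh (\<i> * complex_of_real \<sigma>) (cvec bh)"
    unfolding ts_def M_def using mexp_rot[OF orth sb, of "\<i> * complex_of_real \<sigma>" 1] by simp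
  also have "\<dots> = (\<lambda>j. complex_of_real (X j) + \<i> * complex_of_real (Y j))"
  proof
    fix j
    have e1: "complex_of_real (cosh \<sigma>) * cvec bh j = complex_of_real (X j)"
    proof -
      have r: "nX * (X j / nX) = X j" using nXp by simp
      show ?thesis unfolding ch bh_def cvec_def by (metis of_real_mult r)
    qed
    have e2: "complex_of_real (sinh \<sigma>) * cvec ah j = complex_of_real (Y j)"
    proof -
      have r: "nY * (Y j / nY) = Y j" using nYp by simp
      show ?thesis unfolding sh ah_def cvec_def by (metis of_real_mult r)
    qed
    have "rotv d ah bh (\<i> * complex_of_real \<sigma>) (cvec bh) j
       = complex_of_real (cosh \<sigma>) * cvec bh j + \<i> * (complex_of_real (sinh \<sigma>) * cvec ah j)"
      unfolding rotv_def Lv_def Pv_def fo sin_ii cos_ii by (simp add: algebra_simps)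
    then show "rotv d ah bh (\<i> * complex_of_real \<sigma>) (cvec bh) j = complex_of_real (X j) + \<i> * complex_of_real (Y j)"
      using e1 e2 by simp
  qed
  finally show ?thesis using g c by blast
qed

lemma cforms:
  assumes "x \<in> realvec d"
  shows "bform d (cvec y) (cvec x) = complex_of_real (bform d y x)"
  by (simp add: bform_cvec)

lemma rep1:
  fixes a b w c1 :: "nat \<Rightarrow> real" and \<gamma> \<delta> \<delta>1 lam \<beta> :: real
  assumes ab: "orth d a b" and aw: "orth d a w" and c1: "c1 \<in> realvec d"
    and f1: "bform d a c1 = 0" and f2: "bform d b c1 = \<gamma>"
    and lam: "lam = bform d (\<lambda>j. c1 j + (cosh \<delta> - 1) * \<gamma> * b j) w"
    and h1: "sinh \<delta>1 * \<beta> = \<gamma> * sinh \<delta>" and h2: "cosh \<delta>1 * \<beta> = lam"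
  shows "rotv d a w (\<i> * complex_of_real \<delta>1) (cvec (\<lambda>j. c1 j + (cosh \<delta> - 1) * \<gamma> * b j - lam * w j + \<beta> * w j))
       = rotv d a b (\<i> * complex_of_real \<delta>) (cvec c1)"
proof
  fix j
  define c1' where "c1' = (\<lambda>j. c1 j + (cosh \<delta> - 1) * \<gamma> * b j - lam * w j + \<beta> * w j)"
  have O: "bform d a a = 1" "bform d b b = 1" "bform d a b = 0" "bform d w w = 1" "bform d a w = 0"
    "bform d b a = 0" "bform d w a = 0"
    using ab aw unfolding orth_def by (auto simp: bform_sym)
  have fa: "bform d a c1' = 0" unfolding c1'_def using O f1 by (simp add: bform_lin)
  have fw: "bform d w c1' = \<beta>"
  proof -
    have "bform d w (\<lambda>j. c1 j + (cosh \<delta> - 1) * \<gamma> * b j) = lam" using lam by (simp add: bform_sym)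
    then show ?thesis unfolding c1'_def using O by (simp add: bform_lin)
  qed
  have fb: "bform d a c1 = 0" "bform d b c1 = \<gamma>" using f1 f2 .
  have H1: "complex_of_real (sinh \<delta>1) * complex_of_real \<beta> = complex_of_real \<gamma> * complex_of_real (sinh \<delta>)"
    using h1 by (metis of_real_mult)
  have H2: "complex_of_real (cosh \<delta>1) * complex_of_real \<beta> = complex_of_real lam"
    using h2 by (metis of_real_mult)
  show "rotv d a w (\<i> * complex_of_real \<delta>1) (cvec c1') j = rotv d a b (\<i> * complex_of_real \<delta>) (cvec c1) j"
    unfolding rotv_def Lv_def Pv_def bform_cvec fa fw fb sin_ii cos_ii
    unfolding c1'_def cvec_def
    using H1 H2 by (simp add: algebra_simps, algebra)
qed

lemma rep2:
  fixes a b w c2 :: "nat \<Rightarrow> real" and \<alpha>2 \<beta>2 \<omega>c \<omega>b \<delta> \<delta>1 :: real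
  assumes ab: "orth d a b" and aw: "orth d a w"
    and f1: "bform d a c2 = \<alpha>2" and f2: "bform d b c2 = \<beta>2" and f3: "bform d w c2 = \<omega>c"
    and f4: "bform d w b = \<omega>b"
  shows "rotv d a w (- (\<i> * complex_of_real \<delta>1)) (rotv d a b (\<i> * complex_of_real \<delta>) (cvec c2))
    = (\<lambda>j. complex_of_real (c2 j + (cosh \<delta> - 1) * (\<alpha>2 * a j + \<beta>2 * b j)
          + sinh \<delta>1 * (- sinh \<delta> * \<alpha>2 * \<omega>b) * a j - sinh \<delta>1 * sinh \<delta> * \<beta>2 * w j
          + (cosh \<delta>1 - 1) * (cosh \<delta> * \<alpha>2 * a j + (\<omega>c + (cosh \<delta> - 1) * \<beta>2 * \<omega>b) * w j))
       + \<i> * complex_of_real (sinh \<delta> * (\<beta>2 * a j - \<alpha>2 * b j)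
          - sinh \<delta>1 * (\<omega>c + (cosh \<delta> - 1) * \<beta>2 * \<omega>b) * a j + sinh \<delta>1 * cosh \<delta> * \<alpha>2 * w j
          + (cosh \<delta>1 - 1) * (sinh \<delta> * \<beta>2 * a j + (- sinh \<delta> * \<alpha>2 * \<omega>b) * w j)))"
proof
  fix j
  have O: "bform d a a = 1" "bform d b b = 1" "bform d a b = 0" "bform d w w = 1" "bform d a w = 0"
    "bform d b a = 0" "bform d w a = 0"
    using ab aw unfolding orth_def by (auto simp: bform_sym)
  define z2 where "z2 = rotv d a b (\<i> * complex_of_real \<delta>) (cvec c2)"
  have z2e: "z2 = (\<lambda>j. cvec c2 j + \<i> * complex_of_real (sinh \<delta>) * (cvec a j * complex_of_real \<beta>2 - cvec b j * complex_of_real \<alpha>2)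
      + complex_of_real (cosh \<delta> - 1) * (cvec a j * complex_of_real \<alpha>2 + cvec b j * complex_of_real \<beta>2))"
    unfolding z2_def rotv_def Lv_def Pv_def bform_cvec f1 f2 sin_ii cos_ii by simp
  have za: "bform d (cvec a) z2 = complex_of_real (cosh \<delta> * \<alpha>2) + \<i> * complex_of_real (sinh \<delta> * \<beta>2)"
    unfolding z2e by (simp add: bform_lin bform_cvec O f1 algebra_simps)
  have zw: "bform d (cvec w) z2 = complex_of_real (\<omega>c + (cosh \<delta> - 1) * \<beta>2 * \<omega>b) + \<i> * complex_of_real (- sinh \<delta> * \<alpha>2 * \<omega>b)"
    unfolding z2e by (simp add: bform_lin bform_cvec O f3 f4 algebra_simps)
  show "rotv d a w (- (\<i> * complex_of_real \<delta>1)) z2 j = (complex_of_real (c2 j + (cosh \<delta> - 1) * (\<alpha>2 * a j + \<beta>2 * b j)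
          + sinh \<delta>1 * (- sinh \<delta> * \<alpha>2 * \<omega>b) * a j - sinh \<delta>1 * sinh \<delta> * \<beta>2 * w j
          + (cosh \<delta>1 - 1) * (cosh \<delta> * \<alpha>2 * a j + (\<omega>c + (cosh \<delta> - 1) * \<beta>2 * \<omega>b) * w j))
       + \<i> * complex_of_real (sinh \<delta> * (\<beta>2 * a j - \<alpha>2 * b j)
          - sinh \<delta>1 * (\<omega>c + (cosh \<delta> - 1) * \<beta>2 * \<omega>b) * a j + sinh \<delta>1 * cosh \<delta> * \<alpha>2 * w j
          + (cosh \<delta>1 - 1) * (sinh \<delta> * \<beta>2 * a j + (- sinh \<delta> * \<alpha>2 * \<omega>b) * w j)))"
    unfolding rotv_def[of d a w] Lv_def[of d a w] Pv_def[of d a w] za zw sin_minus cos_minus sin_ii cos_ii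
    unfolding z2e cvec_def
    by (simp add: algebra_simps)
qed

lemma lim_sinh_div: "((\<lambda>x. sinh x / x) \<longlongrightarrow> 1) (at_right (0::real))"
proof -
  have "((\<lambda>x. sinh x) has_field_derivative cosh 0 * 1) (at (0::real) within {0<..})"
    by (rule has_field_derivative_sinh[OF DERIV_ident])
  then show ?thesis unfolding has_field_derivative_iff by simp
qed

lemma lim_sinh: "(sinh \<longlongrightarrow> 0) (at_right (0::real))"
  using tendsto_sinh[OF tendsto_ident_at, of "0::real" "{0<..}"] by simp
lemma lim_cosh: "(cosh \<longlongrightarrow> 1) (at_right (0::real))"
  using tendsto_cosh[OF tendsto_ident_at, of "0::real" "{0<..}"] by simp

lemma limit_part:
  fixes \<gamma> N \<omega>b \<omega>c \<alpha>2 \<beta>2 :: real and a b w c2 :: "nat \<Rightarrow> real"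
  assumes gp: "\<gamma> > 0" and Np: "N > 0"
  assumes lam_def: "lam = (\<lambda>\<delta>. \<gamma> / N + (cosh \<delta> - 1) * \<gamma> * \<omega>b)"
  assumes bet_def: "bet = (\<lambda>\<delta>. sqrt (lam \<delta> ^ 2 - \<gamma>^2 * sinh \<delta> ^ 2))"
  assumes s1_def: "s1 = (\<lambda>\<delta>. \<gamma> * sinh \<delta> / bet \<delta>)"
  assumes Ch1_def: "Ch1 = (\<lambda>\<delta>. lam \<delta> / bet \<delta>)"
  assumes u_def: "u = (\<lambda>\<delta>. \<omega>c + (cosh \<delta> - 1) * \<beta>2 * \<omega>b)"
  assumes Xf_def: "Xf = (\<lambda>\<delta> j. c2 j + (cosh \<delta> - 1) * (\<alpha>2 * a j + \<beta>2 * b j)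
          + s1 \<delta> * (- sinh \<delta> * \<alpha>2 * \<omega>b) * a j - s1 \<delta> * sinh \<delta> * \<beta>2 * w j
          + (Ch1 \<delta> - 1) * (cosh \<delta> * \<alpha>2 * a j + u \<delta> * w j))"
  assumes Yd_def: "Yd = (\<lambda>\<delta> j. (sinh \<delta> / \<delta>) * (\<beta>2 * a j - \<alpha>2 * b j)
          - (s1 \<delta> / \<delta>) * u \<delta> * a j + (s1 \<delta> / \<delta>) * cosh \<delta> * \<alpha>2 * w j
          + ((Ch1 \<delta> - 1) / \<delta>) * (sinh \<delta> * \<beta>2 * a j + (- sinh \<delta> * \<alpha>2 * \<omega>b) * w j))"
  shows "((\<lambda>\<delta>. Xf \<delta> j) \<longlongrightarrow> c2 j) (at_right 0)"
    "((\<lambda>\<delta>. Yd \<delta> j) \<longlongrightarrow> (\<beta>2 * a j - \<alpha>2 * b j) - N * \<omega>c * a j + N * \<alpha>2 * w j) (at_right 0)"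
    "((\<lambda>\<delta>. lam \<delta> - \<gamma> * sinh \<delta>) \<longlongrightarrow> \<gamma> / N) (at_right 0)"
proof -
  note S = lim_sinh and C = lim_cosh and SD = lim_sinh_div
  have gN: "\<gamma> / N > 0" using gp Np by simp
  have Lam: "(lam \<longlongrightarrow> \<gamma> / N) (at_right 0)"
    unfolding lam_def using C by (auto intro!: tendsto_eq_intros)
  have Bet: "(bet \<longlongrightarrow> \<gamma> / N) (at_right 0)"
  proof -
    have "(bet \<longlongrightarrow> sqrt ((\<gamma> / N)^2 - \<gamma>^2 * 0^2)) (at_right 0)"
      unfolding bet_def by (intro tendsto_intros Lam S)
    then show ?thesis using gp Np by simp
  qed
  have S1D: "((\<lambda>\<delta>. s1 \<delta> / \<delta>) \<longlongrightarrow> N) (at_right 0)"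
  proof -
    have e: "s1 \<delta> / \<delta> = \<gamma> * (sinh \<delta> / \<delta>) / bet \<delta>" for \<delta> unfolding s1_def by simp
    have "((\<lambda>\<delta>. \<gamma> * (sinh \<delta> / \<delta>) / bet \<delta>) \<longlongrightarrow> \<gamma> * 1 / (\<gamma> / N)) (at_right 0)"
      using gN by (intro tendsto_intros SD Bet) auto
    then show ?thesis unfolding e using gp Np by simp
  qed
  have S1: "(s1 \<longlongrightarrow> 0) (at_right 0)"
  proof -
    have "(s1 \<longlongrightarrow> \<gamma> * 0 / (\<gamma> / N)) (at_right 0)"
      unfolding s1_def using gN by (intro tendsto_intros S Bet) auto
    then show ?thesis by simp
  qed
  have C1l: "(Ch1 \<longlongrightarrow> 1) (at_right 0)"
  proof -
    have "(Ch1 \<longlongrightarrow> (\<gamma> / N) / (\<gamma> / N)) (at_right 0)"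
      unfolding Ch1_def using gN by (intro tendsto_intros Lam Bet) auto
    then show ?thesis using gp Np by simp
  qed
  have ev: "eventually (\<lambda>\<delta>. lam \<delta> > 0 \<and> lam \<delta> ^ 2 - \<gamma>^2 * sinh \<delta> ^ 2 > 0) (at_right 0)"
  proof -
    have "((\<lambda>\<delta>. lam \<delta> ^ 2 - \<gamma>^2 * sinh \<delta> ^ 2) \<longlongrightarrow> (\<gamma> / N)^2 - \<gamma>^2 * 0^2) (at_right 0)"
      by (intro tendsto_intros Lam S)
    then have "eventually (\<lambda>\<delta>. lam \<delta> ^ 2 - \<gamma>^2 * sinh \<delta> ^ 2 > 0) (at_right 0)"
      by (rule order_tendstoD(1)[OF _]) (use gp Np in simp)
    moreover have "eventually (\<lambda>\<delta>. lam \<delta> > 0) (at_right 0)"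
      by (rule order_tendstoD(1)[OF Lam]) (use gN in simp)
    ultimately show ?thesis by eventually_elim auto
  qed
  have C1D: "((\<lambda>\<delta>. (Ch1 \<delta> - 1) / \<delta>) \<longlongrightarrow> 0) (at_right 0)"
  proof -
    have lim: "((\<lambda>\<delta>. \<gamma>^2 * sinh \<delta> * (sinh \<delta> / \<delta>) / (bet \<delta> * (lam \<delta> + bet \<delta>))) \<longlongrightarrow>
        \<gamma>^2 * 0 * 1 / (\<gamma> / N * (\<gamma> / N + \<gamma> / N))) (at_right 0)"
      using gN by (intro tendsto_intros S SD Bet Lam) auto
    have "eventually (\<lambda>\<delta>. \<gamma>^2 * sinh \<delta> * (sinh \<delta> / \<delta>) / (bet \<delta> * (lam \<delta> + bet \<delta>)) = (Ch1 \<delta> - 1) / \<delta>) (at_right 0)"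
      using ev
    proof eventually_elim
      case (elim \<delta>)
      then have bp: "bet \<delta> > 0" unfolding bet_def by simp
      have b2: "bet \<delta> ^ 2 = lam \<delta> ^ 2 - \<gamma>^2 * sinh \<delta> ^ 2" unfolding bet_def using elim by simp
      have lp: "lam \<delta> + bet \<delta> > 0" using bp elim by simp
      have "Ch1 \<delta> - 1 = (lam \<delta> - bet \<delta>) / bet \<delta>" unfolding Ch1_def using bp by (simp add: field_simps)
      also have "lam \<delta> - bet \<delta> = (lam \<delta> ^ 2 - bet \<delta> ^ 2) / (lam \<delta> + bet \<delta>)"
        using lp by (simp add: field_simps power2_eq_square)
      also have "lam \<delta> ^ 2 - bet \<delta> ^ 2 = \<gamma>^2 * sinh \<delta> ^ 2" using b2 by simp
      finally show ?case using bp lp by (simp add: field_simps power2_eq_square)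
    qed
    from Lim_transform_eventually[OF lim this] show ?thesis by simp
  qed
  have U: "(u \<longlongrightarrow> \<omega>c) (at_right 0)"
  proof -
    have "(u \<longlongrightarrow> \<omega>c + (1 - 1) * \<beta>2 * \<omega>b) (at_right 0)" unfolding u_def by (intro tendsto_intros C)
    then show ?thesis by simp
  qed
  show "((\<lambda>\<delta>. Xf \<delta> j) \<longlongrightarrow> c2 j) (at_right 0)"
  proof -
    have "((\<lambda>\<delta>. Xf \<delta> j) \<longlongrightarrow> c2 j + (1 - 1) * (\<alpha>2 * a j + \<beta>2 * b j)
          + 0 * (- 0 * \<alpha>2 * \<omega>b) * a j - 0 * 0 * \<beta>2 * w j
          + (1 - 1) * (1 * \<alpha>2 * a j + \<omega>c * w j)) (at_right 0)"
      unfolding Xf_def by (intro tendsto_intros C S S1 C1l U)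
    then show ?thesis by simp
  qed
  show "((\<lambda>\<delta>. Yd \<delta> j) \<longlongrightarrow> (\<beta>2 * a j - \<alpha>2 * b j) - N * \<omega>c * a j + N * \<alpha>2 * w j) (at_right 0)"
  proof -
    have "((\<lambda>\<delta>. Yd \<delta> j) \<longlongrightarrow> 1 * (\<beta>2 * a j - \<alpha>2 * b j)
          - N * \<omega>c * a j + N * 1 * \<alpha>2 * w j
          + 0 * (0 * \<beta>2 * a j + (- 0 * \<alpha>2 * \<omega>b) * w j)) (at_right 0)"
      unfolding Yd_def by (intro tendsto_intros C S SD S1D C1D U)
    then show ?thesis by simp
  qed
  show "((\<lambda>\<delta>. lam \<delta> - \<gamma> * sinh \<delta>) \<longlongrightarrow> \<gamma> / N) (at_right 0)"
  proof -
    have "((\<lambda>\<delta>. lam \<delta> - \<gamma> * sinh \<delta>) \<longlongrightarrow> \<gamma> / N - \<gamma> * 0) (at_right 0)"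
      by (intro tendsto_intros Lam S)
    then show ?thesis by simp
  qed
qed

lemma bform_div_right: "bform d x (\<lambda>j. y j / c) = bform d x y / c" for x y :: "nat \<Rightarrow> real"
  unfolding bform_def by (simp add: sum_divide_distrib)
lemma bform_div_left: "bform d (\<lambda>j. y j / c) x = bform d y x / c" for x y :: "nat \<Rightarrow> real"
  unfolding bform_def by (simp add: sum_divide_distrib)

lemma choose_eps:
  fixes \<kappa> rb rr oab oar :: real
  assumes "\<kappa> \<noteq> 0" "oab > 0"
  shows "\<exists>\<epsilon>. \<epsilon> * \<kappa> > 0 \<and> 1 + 2 * \<epsilon> * rb + \<epsilon>^2 * rr > 0 \<and> oab + \<epsilon> * oar > 0"
proof -
  have l1: "((\<lambda>\<eta>. 1 + 2 * (sgn \<kappa> * \<eta>) * rb + (sgn \<kappa> * \<eta>)^2 * rr) \<longlongrightarrow> 1 + 2 * (sgn \<kappa> * 0) * rb + (sgn \<kappa> * 0)^2 * rr) (at_right (0::real))"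
    by (intro tendsto_intros)
  have l2: "((\<lambda>\<eta>. oab + (sgn \<kappa> * \<eta>) * oar) \<longlongrightarrow> oab + (sgn \<kappa> * 0) * oar) (at_right (0::real))"
    by (intro tendsto_intros)
  have e1: "eventually (\<lambda>\<eta>. 0 < 1 + 2 * (sgn \<kappa> * \<eta>) * rb + (sgn \<kappa> * \<eta>)^2 * rr) (at_right (0::real))"
    by (rule order_tendstoD(1)[OF l1]) simp
  have e2: "eventually (\<lambda>\<eta>. 0 < oab + (sgn \<kappa> * \<eta>) * oar) (at_right (0::real))"
    by (rule order_tendstoD(1)[OF l2]) (use assms in simp)
  have "eventually (\<lambda>\<eta>. \<eta> > 0 \<and> 0 < 1 + 2 * (sgn \<kappa> * \<eta>) * rb + (sgn \<kappa> * \<eta>)^2 * rr \<and> 0 < oab + (sgn \<kappa> * \<eta>) * oar) (at_right (0::real))"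
    using e1 e2 eventually_at_right_less[of "0::real"] by eventually_elim auto
  then obtain \<eta> where h: "\<eta> > 0" "0 < 1 + 2 * (sgn \<kappa> * \<eta>) * rb + (sgn \<kappa> * \<eta>)^2 * rr" "0 < oab + (sgn \<kappa> * \<eta>) * oar"
    using eventually_happens'[OF trivial_limit_at_right_real] by blast
  have "(sgn \<kappa> * \<eta>) * \<kappa> > 0" using h(1) assms(1)
    by (cases "\<kappa> > 0") (auto simp: mult_pos_pos mult_neg_neg mult_pos_neg)
  then show ?thesis using h by blast
qed

lemma core_single:
  assumes d2: "d \<ge> 2" and tp: "Im \<tau> > 0" and MC: "M \<in> Cplus d"
    and c1X: "c1 \<in> Xd d" and c2X: "c2 \<in> Xd d" and tt: "\<bar>bform d c1 c2\<bar> > 1"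
  shows "\<exists>ts1 ts2 c1' c2'. goodts d ts1 \<and> goodts d ts2 \<and> c1' \<in> Xd d \<and> c2' \<in> Xd d \<and>
     app d [(\<tau>, M)] (cvec c1) = app d ts1 (cvec c1') \<and>
     app d [(\<tau>, M)] (cvec c2) = app d ts1 (app d ts2 (cvec c2'))"
proof -
  obtain \<rho> a0 b0 where rp: "\<rho> > 0" and o0: "orth d a0 b0" and or0: "a0 0 * b0 d - a0 d * b0 0 > 0"
    and Me: "M = smult_mat (complex_of_real \<rho>) (ell d a0 b0)"
    using Cplus_elim[OF MC] by metis
  have c1r: "c1 \<in> realvec d" and c11: "bform d c1 c1 = 1" using c1X unfolding Xd_def by auto
  have c2r: "c2 \<in> realvec d" and c22: "bform d c2 c2 = 1" using c2X unfolding Xd_def by auto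
  obtain a b \<gamma> where oab: "orth d a b" and orab: "ori d a b > 0" and ell_eq: "ell d a b = ell d a0 b0"
    and ac1: "bform d a c1 = 0" and bc1: "bform d b c1 = \<gamma>" and gp: "\<gamma> > 0"
    using rebase[OF o0 _ c1r c11] or0 unfolding ori_def by metis
  have Me': "M = smult_mat (complex_of_real \<rho>) (ell d a b)" using Me ell_eq by simp
  have ar: "a \<in> realvec d" "b \<in> realvec d" using oab unfolding orth_def by auto
  have O: "bform d a a = 1" "bform d b b = 1" "bform d a b = 0" "bform d b a = 0"
    using oab unfolding orth_def by (auto simp: bform_sym)
  have c1a: "bform d c1 a = 0" "bform d c1 b = \<gamma>" using ac1 bc1 by (simp_all add: bform_sym)
  define t12 where "t12 = bform d c1 c2"
  define \<alpha>2 where "\<alpha>2 = bform d a c2"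
  define \<beta>2 where "\<beta>2 = bform d b c2"
  have c2s: "bform d c2 a = \<alpha>2" "bform d c2 b = \<beta>2" "bform d c2 c1 = t12"
    unfolding \<alpha>2_def \<beta>2_def t12_def by (simp_all add: bform_sym)
  define r where "r = (\<lambda>j. c2 j - \<alpha>2 * a j - t12 * c1 j)"
  have rreal: "r \<in> realvec d" using ar c1r c2r unfolding r_def realvec_def by auto
  have ra: "bform d a r = 0" "bform d r a = 0"
    unfolding r_def using O ac1 c1a by (simp_all add: bform_lin \<alpha>2_def[symmetric] c2s)
  have rc1: "bform d c1 r = 0" "bform d r c1 = 0"
    unfolding r_def using c11 c1a ac1 by (simp_all add: bform_lin t12_def[symmetric] c2s)
  have rc2: "bform d r c2 = 1 - \<alpha>2^2 - t12^2"
    unfolding r_def using c22 by (simp add: bform_lin c2s \<alpha>2_def[symmetric] t12_def[symmetric] power2_eq_square)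
  define rr where "rr = bform d r r"
  have rr_eq: "rr = 1 - \<alpha>2^2 - t12^2"
  proof -
    have "bform d r r = bform d r c2 - \<alpha>2 * bform d r a - t12 * bform d r c1"
      by (subst (2) r_def) (simp add: bform_lin)
    then show ?thesis unfolding rr_def using ra rc1 rc2 by simp
  qed
  have t2: "t12^2 > 1" using tt unfolding t12_def
    by (metis abs_le_square_iff abs_one less_le_not_le linorder_not_le one_power2)
  have rrn: "rr < 0" using rr_eq t2 by (smt (verit) zero_le_power2)
  have rc2': "bform d r c2 = rr" using rc2 rr_eq by simp
  define rb where "rb = bform d r b"
  define v0 where "v0 = (\<lambda>j. \<alpha>2 * r j - rr * a j)"
  have v0v0: "bform d v0 v0 = rr * (1 - t12^2)"
  proof -
    have "bform d v0 v0 = \<alpha>2 * \<alpha>2 * rr + rr * rr"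
      unfolding v0_def using O ra by (simp add: bform_lin rr_def[symmetric] algebra_simps)
    then show ?thesis using rr_eq by algebra
  qed
  have v0pos: "bform d v0 v0 > 0" unfolding v0v0 using rrn t2 by (simp add: mult_neg_neg)
  have v0c2: "bform d v0 c2 = 0"
    unfolding v0_def using rc2' by (simp add: bform_lin \<alpha>2_def[symmetric])
  define \<kappa> where "\<kappa> = ori d v0 c2"
  have kne: "\<kappa> \<noteq> 0" unfolding \<kappa>_def using pos_pair[OF v0pos _ v0c2] c22 by simp
  obtain \<epsilon> where ek: "\<epsilon> * \<kappa> > 0" and eW: "1 + 2 * \<epsilon> * rb + \<epsilon>^2 * rr > 0"
    and eo: "ori d a b + \<epsilon> * ori d a r > 0"
    using choose_eps[OF kne orab] by blast
  define W where "W = (\<lambda>j. b j + \<epsilon> * r j)"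
  have WW: "bform d W W = 1 + 2 * \<epsilon> * rb + \<epsilon>^2 * rr"
    unfolding W_def using O by (simp add: bform_lin rr_def[symmetric] rb_def[symmetric] bform_sym[of d b r] power2_eq_square algebra_simps)
  define N where "N = sqrt (bform d W W)"
  have Np: "N > 0" unfolding N_def using WW eW by simp
  have NN: "N * N = bform d W W" unfolding N_def using WW eW by simp
  define w where "w = (\<lambda>j. W j / N)"
  have aW: "bform d a W = 0" unfolding W_def using O ra by (simp add: bform_lin)
  have oaw: "orth d a w" unfolding orth_def
  proof (intro conjI)
    show "a \<in> realvec d" using ar by simp
    show "w \<in> realvec d" using ar rreal unfolding w_def W_def realvec_def by auto
    show "bform d a a = 1" using O by simp
    show "bform d w w = 1" unfolding w_def bform_div using NN Np WW eW by simp
    show "bform d a w = 0" unfolding w_def bform_div_right using aW by simp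
  qed
  have oriaw: "ori d a w > 0"
  proof -
    have "ori d a w = (ori d a b + \<epsilon> * ori d a r) / N"
      unfolding ori_def w_def W_def using Np by (simp add: field_simps)
    then show ?thesis using eo Np by simp
  qed
  define \<omega>b where "\<omega>b = bform d w b"
  define \<omega>c where "\<omega>c = bform d w c2"
  have wb: "\<omega>b = (1 + \<epsilon> * rb) / N"
    unfolding \<omega>b_def w_def bform_div_left W_def using O by (simp add: bform_lin rb_def)
  have wc: "N * \<omega>c = \<beta>2 + \<epsilon> * rr"
    unfolding \<omega>c_def w_def bform_div_left W_def using Np rc2' by (simp add: bform_lin \<beta>2_def)
  have c1w: "bform d c1 w = \<gamma> / N"
    unfolding w_def bform_div_right W_def using c1a rc1 by (simp add: bform_lin)
  define lam where "lam = (\<lambda>\<delta>. \<gamma> / N + (cosh \<delta> - 1) * \<gamma> * \<omega>b)"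
  define bet where "bet = (\<lambda>\<delta>. sqrt (lam \<delta> ^ 2 - \<gamma>^2 * sinh \<delta> ^ 2))"
  define s1 where "s1 = (\<lambda>\<delta>. \<gamma> * sinh \<delta> / bet \<delta>)"
  define Ch1 where "Ch1 = (\<lambda>\<delta>. lam \<delta> / bet \<delta>)"
  define u where "u = (\<lambda>\<delta>. \<omega>c + (cosh \<delta> - 1) * \<beta>2 * \<omega>b)"
  define Xf where "Xf = (\<lambda>\<delta> j. c2 j + (cosh \<delta> - 1) * (\<alpha>2 * a j + \<beta>2 * b j)
          + s1 \<delta> * (- sinh \<delta> * \<alpha>2 * \<omega>b) * a j - s1 \<delta> * sinh \<delta> * \<beta>2 * w j
          + (Ch1 \<delta> - 1) * (cosh \<delta> * \<alpha>2 * a j + u \<delta> * w j))"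
  define Yd where "Yd = (\<lambda>\<delta> j. (sinh \<delta> / \<delta>) * (\<beta>2 * a j - \<alpha>2 * b j)
          - (s1 \<delta> / \<delta>) * u \<delta> * a j + (s1 \<delta> / \<delta>) * cosh \<delta> * \<alpha>2 * w j
          + ((Ch1 \<delta> - 1) / \<delta>) * (sinh \<delta> * \<beta>2 * a j + (- sinh \<delta> * \<alpha>2 * \<omega>b) * w j))"
  note LP = limit_part[OF gp Np lam_def bet_def s1_def Ch1_def u_def Xf_def Yd_def]
  define Lim where "Lim = (\<lambda>j. \<epsilon> * v0 j)"
  have Lj: "(\<beta>2 * a j - \<alpha>2 * b j) - N * \<omega>c * a j + N * \<alpha>2 * w j = Lim j" for j
  proof -
    have "N * w j = b j + \<epsilon> * r j" unfolding w_def W_def using Np by simp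
    then have "N * \<alpha>2 * w j = \<alpha>2 * (b j + \<epsilon> * r j)" by (metis mult.assoc mult.commute)
    then show ?thesis unfolding Lim_def v0_def using wc by (simp add: algebra_simps)
  qed
  have YL: "((\<lambda>\<delta>. Yd \<delta> j) \<longlongrightarrow> Lim j) (at_right 0)" for j using LP(2)[of j] Lj by simp
  have XL: "((\<lambda>\<delta>. Xf \<delta> j) \<longlongrightarrow> c2 j) (at_right 0)" for j using LP(1)[of j] by simp
  have QL: "((\<lambda>\<delta>. bform d (Yd \<delta>) (Yd \<delta>)) \<longlongrightarrow> bform d Lim Lim) (at_right 0)"
    unfolding bform_def by (intro tendsto_intros YL)
  have enz: "\<epsilon> \<noteq> 0" using ek by auto
  have LL: "bform d Lim Lim > 0"
  proof -
    have "bform d Lim Lim = \<epsilon> * \<epsilon> * bform d v0 v0" unfolding Lim_def by (simp add: bform_lin)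
    moreover have "\<epsilon> * \<epsilon> > 0" using enz by (metis not_real_square_gt_zero)
    ultimately show ?thesis using v0pos by simp
  qed
  have OL: "((\<lambda>\<delta>. ori d (Yd \<delta>) (Xf \<delta>)) \<longlongrightarrow> ori d Lim c2) (at_right 0)"
    unfolding ori_def by (intro tendsto_intros YL XL)
  have LO: "ori d Lim c2 > 0"
  proof -
    have "ori d Lim c2 = \<epsilon> * \<kappa>" unfolding Lim_def \<kappa>_def ori_def by (simp add: algebra_simps)
    then show ?thesis using ek by simp
  qed
  have rt: "\<rho> * Im \<tau> > 0" using rp tp by simp
  have "eventually (\<lambda>\<delta>. \<delta> > 0 \<and> \<delta> < \<rho> * Im \<tau> \<and> bform d (Yd \<delta>) (Yd \<delta>) > 0 \<and>
      ori d (Yd \<delta>) (Xf \<delta>) > 0 \<and> lam \<delta> - \<gamma> * sinh \<delta> > 0) (at_right 0)"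
  proof -
    have e1: "eventually (\<lambda>\<delta>. \<delta> < \<rho> * Im \<tau>) (at_right (0::real))"
      by (rule order_tendstoD(2)[OF tendsto_ident_at rt])
    have e2: "eventually (\<lambda>\<delta>. bform d (Yd \<delta>) (Yd \<delta>) > 0) (at_right (0::real))"
      by (rule order_tendstoD(1)[OF QL LL])
    have e3: "eventually (\<lambda>\<delta>. ori d (Yd \<delta>) (Xf \<delta>) > 0) (at_right (0::real))"
      by (rule order_tendstoD(1)[OF OL LO])
    have e4: "eventually (\<lambda>\<delta>. lam \<delta> - \<gamma> * sinh \<delta> > 0) (at_right (0::real))"
      by (rule order_tendstoD(1)[OF LP(3)]) (use gp Np in simp)
    show ?thesis using e1 e2 e3 e4 eventually_at_right_less[of "0::real"] by eventually_elim auto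
  qed
  then obtain \<delta> where dp: "\<delta> > 0" and dt: "\<delta> < \<rho> * Im \<tau>" and YY: "bform d (Yd \<delta>) (Yd \<delta>) > 0"
    and YX: "ori d (Yd \<delta>) (Xf \<delta>) > 0" and lg: "lam \<delta> - \<gamma> * sinh \<delta> > 0"
    using eventually_happens'[OF trivial_limit_at_right_real] by blast
  have sp: "sinh \<delta> > 0" using dp by simp
  have gs: "\<gamma> * sinh \<delta> > 0" using gp sp by simp
  have lp: "lam \<delta> > 0" using lg gs by linarith
  have bsq: "lam \<delta> ^ 2 - \<gamma>^2 * sinh \<delta> ^ 2 > 0"
  proof -
    have "(\<gamma> * sinh \<delta>)^2 < (lam \<delta>)^2" using lg gs by (intro power_strict_mono) auto
    then show ?thesis by (simp add: power_mult_distrib)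
  qed
  have bp: "bet \<delta> > 0" unfolding bet_def using bsq by simp
  have b2: "bet \<delta> ^ 2 = lam \<delta> ^ 2 - \<gamma>^2 * sinh \<delta> ^ 2" unfolding bet_def using bsq by simp
  define \<delta>1 where "\<delta>1 = arsinh (s1 \<delta>)"
  have sh1: "sinh \<delta>1 = s1 \<delta>" unfolding \<delta>1_def by simp
  have s1p: "s1 \<delta> > 0" unfolding s1_def using gs bp by simp
  have d1p: "\<delta>1 > 0" using sh1 s1p by (metis sinh_real_pos_iff)
  have ch1: "cosh \<delta>1 = Ch1 \<delta>"
  proof -
    have "s1 \<delta> ^ 2 + 1 = (Ch1 \<delta>)^2"
      unfolding s1_def Ch1_def using b2 bp by (simp add: field_simps power2_eq_square)
    moreover have "Ch1 \<delta> > 0" unfolding Ch1_def using lp bp by simp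
    ultimately show ?thesis unfolding \<delta>1_def cosh_arsinh_real by simp
  qed
  have h1: "sinh \<delta>1 * bet \<delta> = \<gamma> * sinh \<delta>" using sh1 bp unfolding s1_def by simp
  have h2: "cosh \<delta>1 * bet \<delta> = lam \<delta>" using ch1 bp unfolding Ch1_def by simp
  have lamE: "lam \<delta> = bform d (\<lambda>j. c1 j + (cosh \<delta> - 1) * \<gamma> * b j) w"
    unfolding lam_def using c1w by (simp add: bform_lin \<omega>b_def bform_sym[of d b w])
  define c1' where "c1' = (\<lambda>j. c1 j + (cosh \<delta> - 1) * \<gamma> * b j - lam \<delta> * w j + bet \<delta> * w j)"
  have R1: "rotv d a w (\<i> * complex_of_real \<delta>1) (cvec c1') = rotv d a b (\<i> * complex_of_real \<delta>) (cvec c1)"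
    unfolding c1'_def by (rule rep1[OF oab oaw c1r ac1 bc1 lamE h1 h2])
  define Y where "Y = (\<lambda>j. \<delta> * Yd \<delta> j)"
  define X where "X = Xf \<delta>"
  define z2 where "z2 = rotv d a b (\<i> * complex_of_real \<delta>) (cvec c2)"
  define Z where "Z = rotv d a w (- (\<i> * complex_of_real \<delta>1)) z2"
  have ZE: "Z = (\<lambda>j. cvec X j + \<i> * cvec Y j)"
  proof -
    note E = rep2[OF oab oaw \<alpha>2_def[symmetric] \<beta>2_def[symmetric] \<omega>c_def[symmetric] \<omega>b_def[symmetric], of \<delta>1 \<delta>]
    show ?thesis unfolding Z_def z2_def E
    proof (rule ext)
      fix j
      have "X j = c2 j + (cosh \<delta> - 1) * (\<alpha>2 * a j + \<beta>2 * b j)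
          + sinh \<delta>1 * (- sinh \<delta> * \<alpha>2 * \<omega>b) * a j - sinh \<delta>1 * sinh \<delta> * \<beta>2 * w j
          + (cosh \<delta>1 - 1) * (cosh \<delta> * \<alpha>2 * a j + (\<omega>c + (cosh \<delta> - 1) * \<beta>2 * \<omega>b) * w j)"
        unfolding X_def Xf_def sh1 ch1 u_def by simp
      moreover have "Y j = sinh \<delta> * (\<beta>2 * a j - \<alpha>2 * b j)
          - sinh \<delta>1 * (\<omega>c + (cosh \<delta> - 1) * \<beta>2 * \<omega>b) * a j + sinh \<delta>1 * cosh \<delta> * \<alpha>2 * w j
          + (cosh \<delta>1 - 1) * (sinh \<delta> * \<beta>2 * a j + (- sinh \<delta> * \<alpha>2 * \<omega>b) * w j)"
        unfolding Y_def Yd_def sh1 ch1 u_def using dp by (simp add: field_simps)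
      ultimately show "complex_of_real (c2 j + (cosh \<delta> - 1) * (\<alpha>2 * a j + \<beta>2 * b j)
          + sinh \<delta>1 * (- sinh \<delta> * \<alpha>2 * \<omega>b) * a j - sinh \<delta>1 * sinh \<delta> * \<beta>2 * w j
          + (cosh \<delta>1 - 1) * (cosh \<delta> * \<alpha>2 * a j + (\<omega>c + (cosh \<delta> - 1) * \<beta>2 * \<omega>b) * w j))
       + \<i> * complex_of_real (sinh \<delta> * (\<beta>2 * a j - \<alpha>2 * b j)
          - sinh \<delta>1 * (\<omega>c + (cosh \<delta> - 1) * \<beta>2 * \<omega>b) * a j + sinh \<delta>1 * cosh \<delta> * \<alpha>2 * w j
          + (cosh \<delta>1 - 1) * (sinh \<delta> * \<beta>2 * a j + (- sinh \<delta> * \<alpha>2 * \<omega>b) * w j)) = cvec X j + \<i> * cvec Y j"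
        unfolding cvec_def by simp
    qed
  qed
  have wr: "w \<in> realvec d" using oaw unfolding orth_def by simp
  have Xr: "X \<in> realvec d" using ar wr c2r unfolding X_def Xf_def realvec_def by auto
  have Yr: "Y \<in> realvec d" using ar wr unfolding Y_def Yd_def realvec_def by auto
  have sc2: "\<forall>j>d. cvec c2 j = 0" using cvec_supp[OF c2X] .
  have sc1: "\<forall>j>d. cvec c1 j = 0" using cvec_supp[OF c1X] .
  have sz2: "\<forall>j>d. z2 j = 0" unfolding z2_def using rot_supp[OF oab sc2] .
  have sZ: "\<forall>j>d. Z j = 0" unfolding Z_def using rot_supp[OF oaw sz2] .
  have ZZ: "bform d Z Z = 1"
    unfolding Z_def z2_def rot_bform[OF oaw] rot_bform[OF oab] using cvec_form[OF c2X] .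
  have ZZ': "bform d Z Z = complex_of_real (bform d X X - bform d Y Y) + \<i> * complex_of_real (2 * bform d X Y)"
    unfolding ZE by (simp add: bform_lin bform_cvec bform_sym[of d Y X] algebra_simps)
  have XY1: "bform d X X - bform d Y Y = 1" and XY0: "bform d X Y = 0"
  proof -
    have "complex_of_real (bform d X X - bform d Y Y) + \<i> * complex_of_real (2 * bform d X Y) = 1"
      using ZZ ZZ' by simp
    then have "Re (complex_of_real (bform d X X - bform d Y Y) + \<i> * complex_of_real (2 * bform d X Y)) = 1"
      "Im (complex_of_real (bform d X X - bform d Y Y) + \<i> * complex_of_real (2 * bform d X Y)) = 0"
      by simp_all
    then show "bform d X X - bform d Y Y = 1" "bform d X Y = 0" by simp_all
  qed
  have YYp: "bform d Y Y > 0"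
  proof -
    have "bform d Y Y = \<delta> * \<delta> * bform d (Yd \<delta>) (Yd \<delta>)" unfolding Y_def by (simp add: bform_lin)
    then show ?thesis using YY dp by simp
  qed
  have YXp: "ori d Y X > 0"
  proof -
    have "ori d Y X = \<delta> * ori d (Yd \<delta>) (Xf \<delta>)" unfolding Y_def X_def ori_def by (simp add: algebra_simps)
    then show ?thesis using YX dp by simp
  qed
  obtain ts2 c2' where g2: "goodts d ts2" and c2'X: "c2' \<in> Xd d"
    and A2: "app d ts2 (cvec c2') = (\<lambda>j. complex_of_real (X j) + \<i> * complex_of_real (Y j))"
    using tube_rep[OF Xr Yr XY1 XY0 YYp YXp] by blast
  have A2': "app d ts2 (cvec c2') = Z" using A2 unfolding ZE by (simp add: cvec_def)
  have c1'r: "c1' \<in> realvec d" using c1r ar wr unfolding c1'_def realvec_def by auto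
  have sc1': "\<forall>j>d. cvec c1' j = 0" using c1'r unfolding realvec_def cvec_def by simp
  have c1'X: "c1' \<in> Xd d"
  proof -
    have "bform d (cvec c1') (cvec c1') = bform d (cvec c1) (cvec c1)"
      using rot_bform[OF oaw, of "\<i> * complex_of_real \<delta>1" "cvec c1'"] rot_bform[OF oab, of "\<i> * complex_of_real \<delta>" "cvec c1"]
      unfolding R1 by simp
    then have "bform d c1' c1' = 1" using c11 by (simp add: bform_cvec)
    then show ?thesis using c1'r unfolding Xd_def by simp
  qed
  define M1 where "M1 = smult_mat (complex_of_real 1) (ell d a w)"
  have C1aw: "ell d a w \<in> C1 d" unfolding C1_def using oaw oriaw unfolding orth_def ori_def by blast
  have M1C: "M1 \<in> Cplus d" unfolding M1_def Cplus_def using C1aw zero_less_one by blast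
  define ts1 where "ts1 = [(\<tau> - \<i> * complex_of_real (\<delta> / \<rho>), M), (\<i> * complex_of_real \<delta>1, M1)]"
  have g1: "goodts d ts1"
  proof -
    have "\<delta> / \<rho> < Im \<tau>" using dt rp by (simp add: divide_less_eq mult.commute)
    then show ?thesis unfolding goodts_def ts1_def using MC M1C d1p by simp
  qed
  have appM: "app d [(t, M)] z = rotv d a b (t * complex_of_real \<rho>) z" if "\<forall>j>d. z j = 0" for t z
    using mexp_rot[OF oab that] unfolding Me' by simp
  have app1: "app d ts1 z = rotv d a b ((\<tau> - \<i> * complex_of_real (\<delta> / \<rho>)) * complex_of_real \<rho>)
      (rotv d a w (\<i> * complex_of_real \<delta>1) z)" if "\<forall>j>d. z j = 0" for z
  proof -
    have "mvec d (mexp d (smult_mat (\<i> * complex_of_real \<delta>1) M1)) z = rotv d a w (\<i> * complex_of_real \<delta>1) z"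
      using mexp_rot[OF oaw that, of "\<i> * complex_of_real \<delta>1" 1] unfolding M1_def by simp
    moreover have "\<forall>j>d. rotv d a w (\<i> * complex_of_real \<delta>1) z j = 0" using rot_supp[OF oaw that] .
    ultimately show ?thesis unfolding ts1_def using mexp_rot[OF oab] unfolding Me' by simp
  qed
  have targ: "(\<tau> - \<i> * complex_of_real (\<delta> / \<rho>)) * complex_of_real \<rho> + \<i> * complex_of_real \<delta> = \<tau> * complex_of_real \<rho>"
  proof -
    have "complex_of_real (\<delta> / \<rho>) * complex_of_real \<rho> = complex_of_real \<delta>"
      using rp by (metis of_real_mult nonzero_divide_eq_eq less_irrefl)
    then show ?thesis using rp by (simp add: algebra_simps)
  qed
  have E1: "app d [(\<tau>, M)] (cvec c1) = app d ts1 (cvec c1')"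
    unfolding app1[OF sc1'] appM[OF sc1] R1 rot_comp[OF oab] targ ..
  have E2: "app d [(\<tau>, M)] (cvec c2) = app d ts1 (app d ts2 (cvec c2'))"
  proof -
    have "rotv d a w (\<i> * complex_of_real \<delta>1) Z = z2"
      unfolding Z_def rot_comp[OF oaw] by (simp add: rot_zero)
    then have "app d ts1 (app d ts2 (cvec c2')) = rotv d a b ((\<tau> - \<i> * complex_of_real (\<delta> / \<rho>)) * complex_of_real \<rho>) z2"
      unfolding A2' app1[OF sZ] by simp
    also have "\<dots> = rotv d a b (\<tau> * complex_of_real \<rho>) (cvec c2)"
      unfolding z2_def rot_comp[OF oab] targ ..
    finally show ?thesis unfolding appM[OF sc2] by simp
  qed
  show ?thesis using g1 g2 c1'X c2'X E1 E2 by blast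
qed

lemma core:
  assumes d2: "d \<ge> 2" and g: "goodts d ts" and c1X: "c1 \<in> Xd d" and c2X: "c2 \<in> Xd d"
    and tt: "\<bar>bform d c1 c2\<bar> > 1"
  shows "\<exists>ts1 ts2 c1' c2'. goodts d ts1 \<and> goodts d ts2 \<and> c1' \<in> Xd d \<and> c2' \<in> Xd d \<and>
     app d ts (cvec c1) = app d ts1 (cvec c1') \<and>
     app d ts (cvec c2) = app d ts1 (app d ts2 (cvec c2'))"
proof -
  have ne: "ts \<noteq> []" using g unfolding goodts_def by simp
  obtain \<tau> M where lt: "last ts = (\<tau>, M)" by fastforce
  have tsd: "ts = butlast ts @ [(\<tau>, M)]" using ne lt by (metis append_butlast_last_id)
  have "(\<tau>, M) \<in> set ts" using ne lt by (metis last_in_set)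
  then have tp: "Im \<tau> > 0" and MC: "M \<in> Cplus d" using g unfolding goodts_def by auto
  obtain ts1 ts2 c1' c2' where h: "goodts d ts1" "goodts d ts2" "c1' \<in> Xd d" "c2' \<in> Xd d"
    "app d [(\<tau>, M)] (cvec c1) = app d ts1 (cvec c1')"
    "app d [(\<tau>, M)] (cvec c2) = app d ts1 (app d ts2 (cvec c2'))"
    using core_single[OF d2 tp MC c1X c2X tt] by blast
  have g1: "goodts d (butlast ts @ ts1)"
    using g h(1) unfolding goodts_def by (auto dest: in_set_butlastD)
  have "app d ts (cvec c1) = app d (butlast ts @ ts1) (cvec c1')"
    by (subst tsd) (simp only: app_append h(5))
  moreover have "app d ts (cvec c2) = app d (butlast ts @ ts1) (app d ts2 (cvec c2'))"
    by (subst tsd) (simp only: app_append h(6))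
  ultimately show ?thesis using g1 h(2-4) by blast
qed

lemma pair_in_T:
  assumes d2: "d \<ge> 2" and A: "A \<in> G0plus d" and c1X: "c1 \<in> Xd d" and c2X: "c2 \<in> Xd d"
    and tt: "\<bar>bform d c1 c2\<bar> > 1"
  shows "[mvec d A (cvec c1), mvec d A (cvec c2)] \<in> Tplus d 2"
proof -
  obtain ts where g: "goodts d ts" and Ae: "A = mprod_list d (map (\<lambda>(t, M). mexp d (smult_mat t M)) ts)"
    using G0_goodts[OF A] by blast
  have e: "mvec d A (cvec c) = app d ts (cvec c)" if "c \<in> Xd d" for c
    unfolding Ae using mvec_prod[OF goodts_Cplus[OF g] cvec_supp[OF that]] .
  obtain ts1 ts2 c1' c2' where h: "goodts d ts1" "goodts d ts2" "c1' \<in> Xd d" "c2' \<in> Xd d"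
    "app d ts (cvec c1) = app d ts1 (cvec c1')"
    "app d ts (cvec c2) = app d ts1 (app d ts2 (cvec c2'))"
    using core[OF d2 g c1X c2X tt] by blast
  show ?thesis unfolding e[OF c1X] e[OF c2X] h(5,6) by (rule T2_intro[OF h(1-4)])
qed

theorem lemma11:
  fixes d :: nat and c1 c2 :: "nat \<Rightarrow> real"
  assumes "d \<ge> 2"
    and "c1 \<in> Xd d" and "c2 \<in> Xd d"
    and "\<bar>bform d c1 c2\<bar> > 1"
  shows "(\<forall>A \<in> G0plus d. [mvec d A (cvec c1), mvec d A (cvec c2)] \<in> Tplus d 2)
    \<and> (\<forall>A \<in> G0plus d. [mvec d A (cvec c1), mvec d A (cvec c2)] \<in> Tplus d 2
            \<and> (mvec d A (cvec c1), mvec d A (cvec c2)) \<in> T2_21 d)"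
proof -
  have t21: "\<bar>bform d c2 c1\<bar> > 1" using assms(4) by (simp add: bform_sym)
  have P: "[mvec d A (cvec c1), mvec d A (cvec c2)] \<in> Tplus d 2" if "A \<in> G0plus d" for A
    using pair_in_T[OF assms(1) that assms(2,3,4)] .
  have Q: "(mvec d A (cvec c1), mvec d A (cvec c2)) \<in> T2_21 d" if "A \<in> G0plus d" for A
    unfolding T2_21_def using pair_in_T[OF assms(1) that assms(3,2) t21] by simp
  show ?thesis using P Q by blast
qed

end
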